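(* Let $B$ be a catacondensed flat hexagonal complex (equivalently, a catacondensed chemical hexagonal complex). Then $B$ is Kekulean, i.e. the skeleton graph of $B$ has a perfect matching.
   Context: Polygonal complexes are described by schemes. Fix a finite alphabet $A$; each symbol $a\in A$ has two literals $a^+$ and $a^-$, each the inverse of the other. A word is a cyclic sequence of literals and represents an oriented polygon whose sides are labelled by the literals in order; a scheme is a finite list of words and represents the polygonal complex obtained by taking one polygon per word and gluing together all sides that carry the same symbol. The gluing is parallel if the two occurrences have the same exponent and antiparallel otherwise. Two schemes represent the same complex if one is obtained from the other by permuting words, cyclically rotating a word, renaming symbols, inverting all occurrences of one symbol, or reversing a word while inverting all of its literals. The skeleton graph of the complex has the edges (symbols) and the vertices (corners of polygons, after gluing) as its edges and vertices. A scheme/complex is: - connected, if it cannot be split into two nonempty subschemes with no symbol in common; - flat, if each symbol occurs at most twice, i.e. every edge lies in at most two polygons; - hexagonal, if every word has exactly six literals; - catacondensed, if whenever two literals $a,b$ occur consecutively in some word, at least one of the symbols $a,b$ occurs only once in the scheme (geometrically, no vertex belongs to three hexagons, so each vertex lies in at most two hexagonal faces). A catacondensed flat hexagonal complex is a connected, flat, hexagonal, catacondensed scheme. Its skeleton then has maximum degree at most $3$. The complex need not be planar or orientable; for example it may contain untwisted cyclacene or Möbius (twisted) cyclacene rings, and it may determine a surface with boundary of any genus. A complex is Kekulean if its skeleton graph admits a perfect matching (a Kekulé structure). *)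

theory Defs
  imports Main
begin

text \<open>A literal is a pair (a, s) of a symbol a and a sign s
  (True = a^+, False = a^-). A word is a list of literals read cyclically,
  a scheme is a list of words. Positions (i, j) index the j-th literal of the
  i-th word; the corner (i, j) of polygon i is the corner at which the j-th
  side starts (when walking along the word).\<close>

type_synonym 'a literal = "'a \<times> bool"
type_synonym 'a word = "'a literal list"
type_synonym 'a scheme = "'a word list"

definition occs :: "'a scheme \<Rightarrow> (nat \<times> nat) set" where
  "occs S = {(i, j). i < length S \<and> j < length (S ! i)}"

definition corners :: "'a scheme \<Rightarrow> (nat \<times> nat) set" where
  "corners S = occs S"

definition sym_at :: "'a scheme \<Rightarrow> nat \<times> nat \<Rightarrow> 'a" where
  "sym_at S p = fst (S ! fst p ! snd p)"

definition sign_at :: "'a scheme \<Rightarrow> nat \<times> nat \<Rightarrow> bool" where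
  "sign_at S p = snd (S ! fst p ! snd p)"

definition next_corner :: "'a scheme \<Rightarrow> nat \<times> nat \<Rightarrow> nat \<times> nat" where
  "next_corner S p = (fst p, Suc (snd p) mod length (S ! fst p))"

text \<open>Tail and head corner of the edge carried by the side at position p,
  oriented according to the symbol (positive literal: along the word).\<close>
definition tail_at :: "'a scheme \<Rightarrow> nat \<times> nat \<Rightarrow> nat \<times> nat" where
  "tail_at S p = (if sign_at S p then p else next_corner S p)"

definition head_at :: "'a scheme \<Rightarrow> nat \<times> nat \<Rightarrow> nat \<times> nat" where
  "head_at S p = (if sign_at S p then next_corner S p else p)"

text \<open>Gluing sides with the same symbol identifies tails with tails and heads
  with heads (this covers parallel and antiparallel gluings).\<close>
definition glue :: "'a scheme \<Rightarrow> ((nat \<times> nat) \<times> (nat \<times> nat)) set" where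
  "glue S = {(tail_at S p, tail_at S q) | p q. p \<in> occs S \<and> q \<in> occs S \<and> sym_at S p = sym_at S q}
          \<union> {(head_at S p, head_at S q) | p q. p \<in> occs S \<and> q \<in> occs S \<and> sym_at S p = sym_at S q}"

definition vertex_of :: "'a scheme \<Rightarrow> nat \<times> nat \<Rightarrow> (nat \<times> nat) set" where
  "vertex_of S c = (glue S)\<^sup>* `` {c}"

definition vertices :: "'a scheme \<Rightarrow> (nat \<times> nat) set set" where
  "vertices S = vertex_of S ` corners S"

definition symbols :: "'a scheme \<Rightarrow> 'a set" where
  "symbols S = sym_at S ` occs S"

definition edge_ends :: "'a scheme \<Rightarrow> 'a \<Rightarrow> (nat \<times> nat) set set" where
  "edge_ends S a =
     {vertex_of S (tail_at S p) | p. p \<in> occs S \<and> sym_at S p = a}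
   \<union> {vertex_of S (head_at S p) | p. p \<in> occs S \<and> sym_at S p = a}"

text \<open>Perfect matching of a multigraph with vertex set V, edge set E and
  endpoint map ends (loops have a single endpoint and are excluded).\<close>
definition perfect_matching ::
  "'v set \<Rightarrow> 'e set \<Rightarrow> ('e \<Rightarrow> 'v set) \<Rightarrow> 'e set \<Rightarrow> bool" where
  "perfect_matching V E ends M \<longleftrightarrow>
     M \<subseteq> E \<and> (\<forall>e\<in>M. card (ends e) = 2) \<and> (\<forall>v\<in>V. \<exists>!e. e \<in> M \<and> v \<in> ends e)"

definition kekulean :: "'a scheme \<Rightarrow> bool" where
  "kekulean S \<longleftrightarrow> (\<exists>M. perfect_matching (vertices S) (symbols S) (edge_ends S) M)"

definition word_symbols :: "'a word \<Rightarrow> 'a set" where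
  "word_symbols w = fst ` set w"

definition scheme_connected :: "'a scheme \<Rightarrow> bool" where
  "scheme_connected S \<longleftrightarrow>
     (\<forall>I. I \<subseteq> {..<length S} \<and> I \<noteq> {} \<and> I \<noteq> {..<length S} \<longrightarrow>
        (\<exists>i\<in>I. \<exists>j\<in>{..<length S} - I. word_symbols (S ! i) \<inter> word_symbols (S ! j) \<noteq> {}))"

definition occ_count :: "'a scheme \<Rightarrow> 'a \<Rightarrow> nat" where
  "occ_count S a = card {p \<in> occs S. sym_at S p = a}"

definition flat :: "'a scheme \<Rightarrow> bool" where
  "flat S \<longleftrightarrow> (\<forall>a. occ_count S a \<le> 2)"

definition hexagonal :: "'a scheme \<Rightarrow> bool" where
  "hexagonal S \<longleftrightarrow> (\<forall>w\<in>set S. length w = 6)"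

definition catacondensed :: "'a scheme \<Rightarrow> bool" where
  "catacondensed S \<longleftrightarrow>
     (\<forall>p\<in>occs S. occ_count S (sym_at S p) = 1 \<or> occ_count S (sym_at S (next_corner S p)) = 1)"

definition cata_flat_hex_complex :: "'a scheme \<Rightarrow> bool" where
  "cata_flat_hex_complex S \<longleftrightarrow>
     scheme_connected S \<and> flat S \<and> hexagonal S \<and> catacondensed S"

end

theory Submission
  imports Defs
begin

lemma six: "(j::nat)<6 \<Longrightarrow> j = 0 \<or> j = 1 \<or> j = 2 \<or> j = 3 \<or> j = 4 \<or> j = 5" by linarith
lemma a1: "(b::nat)<6 \<Longrightarrow> Suc b mod 6 \<noteq> b" by (drule six) auto
lemma a2: "(b::nat)<6 \<Longrightarrow> (b+5) mod 6 \<noteq> b" by (drule six) auto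
lemma a3: "(b::nat)<6 \<Longrightarrow> (Suc b mod 6 + 5) mod 6 = b" by (drule six) auto
lemma a4: "(b::nat)<6 \<Longrightarrow> Suc ((b+5) mod 6) mod 6 = b" by (drule six) auto
lemma a5: "(b::nat)<6 \<Longrightarrow> even (Suc b mod 6) = odd b" by (drule six) auto
lemma a6: "(b::nat)<6 \<Longrightarrow> even ((b+5) mod 6) = odd b" by (drule six) auto

lemma choose_sigma:
  fixes P :: "'p set" and ptn :: "'p \<Rightarrow> 'p" and hx :: "'p \<Rightarrow> 'h" and pr :: "'p \<Rightarrow> bool"
  assumes "finite P" "\<forall>p\<in>P. ptn p \<in> P \<and> ptn p \<noteq> p \<and> ptn (ptn p) = p"
   "\<forall>v. (\<forall>p\<in>P. \<forall>q\<in>P. hx p = v \<and> hx q = v \<longrightarrow> pr p = pr q) \<or> (\<exists>x y. {p\<in>P. hx p = v} = {x,y} \<and> pr x \<noteq> pr y)"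
  shows "\<exists>\<sigma>. \<forall>p\<in>P. \<sigma> (hx p) = pr p \<or> \<sigma> (hx (ptn p)) = pr (ptn p)"
using assms
proof (induction "card P" arbitrary: P ptn rule: less_induct)
  case less
  show ?case
  proof (cases "\<exists>v x y. {p\<in>P. hx p = v} = {x,y} \<and> pr x \<noteq> pr y")
    case False
    with less.prems(3) have U: "\<forall>p\<in>P. \<forall>q\<in>P. hx p = hx q \<longrightarrow> pr p = pr q" by metis
    define \<sigma> where "\<sigma> v = (\<exists>p\<in>P. hx p = v \<and> pr p)" for v
    have "\<forall>p\<in>P. \<sigma> (hx p) = pr p" using U unfolding \<sigma>_def by blast
    thus ?thesis by blast
  next
    case True
    then obtain v x y where xy: "{p\<in>P. hx p = v} = {x,y}" "pr x \<noteq> pr y" by blast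
    have x: "x \<in> P" "hx x = v" and y: "y \<in> P" "hx y = v" using xy(1) by blast+
    have xny: "x \<noteq> y" using xy(2) by auto
    have onlyv: "\<forall>p\<in>P. hx p = v \<longrightarrow> p = x \<or> p = y" using xy(1) by blast
    define P' where "P' = P - {x,y}"
    have fin': "finite P'" using less.prems(1) P'_def by simp
    have lt: "card P' < card P" unfolding P'_def using x y less.prems(1)
      by (metis Diff_insert2 card_Diff2_less)
    have good: "\<forall>w. (\<forall>p\<in>P'. \<forall>q\<in>P'. hx p = w \<and> hx q = w \<longrightarrow> pr p = pr q) \<or> (\<exists>x y. {p\<in>P'. hx p = w} = {x,y} \<and> pr x \<noteq> pr y)"
    proof
      fix w
      show "(\<forall>p\<in>P'. \<forall>q\<in>P'. hx p = w \<and> hx q = w \<longrightarrow> pr p = pr q) \<or> (\<exists>x y. {p\<in>P'. hx p = w} = {x,y} \<and> pr x \<noteq> pr y)"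
      proof (cases "w = v")
        case True
        then show ?thesis using onlyv P'_def by blast
      next
        case False
        have eq: "{p\<in>P'. hx p = w} = {p\<in>P. hx p = w}" using False x y P'_def by auto
        from less.prems(3) have "(\<forall>p\<in>P. \<forall>q\<in>P. hx p = w \<and> hx q = w \<longrightarrow> pr p = pr q) \<or> (\<exists>x y. {p\<in>P. hx p = w} = {x,y} \<and> pr x \<noteq> pr y)" by blast
        then show ?thesis using eq P'_def by auto
      qed
    qed
    have nv: "\<forall>p\<in>P'. hx p \<noteq> v" using onlyv P'_def by blast
    show ?thesis
    proof (cases "ptn x = y")
      case True
      have ty: "ptn y = x" using True less.prems(2) x by metis
      have inv: "\<forall>p\<in>P'. ptn p \<in> P' \<and> ptn p \<noteq> p \<and> ptn (ptn p) = p"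
        using less.prems(2) True ty unfolding P'_def by (metis Diff_iff insert_iff singletonD)
      obtain \<sigma> where s: "\<forall>p\<in>P'. \<sigma> (hx p) = pr p \<or> \<sigma> (hx (ptn p)) = pr (ptn p)"
        using less.hyps[OF lt fin' inv good] by blast
      have "\<forall>p\<in>P. \<sigma> (hx p) = pr p \<or> \<sigma> (hx (ptn p)) = pr (ptn p)"
      proof
        fix p assume "p \<in> P"
        show "\<sigma> (hx p) = pr p \<or> \<sigma> (hx (ptn p)) = pr (ptn p)"
        proof (cases "p \<in> P'")
          case True then show ?thesis using s by blast
        next
          case False
          then have "p = x \<or> p = y" using \<open>p \<in> P\<close> P'_def by blast
          then show ?thesis using True ty x y xy(2) by (cases "\<sigma> v"; cases "pr x"; cases "pr y") auto
        qed
      qed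
      then show ?thesis by blast
    next
      case False
      define a where "a = ptn x"
      define b where "b = ptn y"
      have a: "a \<in> P" "a \<noteq> x" "a \<noteq> y" "ptn a = x" using less.prems(2) x False a_def by auto
      have b: "b \<in> P" "b \<noteq> y" "b \<noteq> x" "ptn b = y" using less.prems(2) y False b_def x by metis+
      have anb: "a \<noteq> b" using a b xny by metis
      define ptn' where "ptn' = ptn(a := b, b := a)"
      have aP: "a \<in> P'" "b \<in> P'" using a b P'_def by auto
      have inv: "\<forall>p\<in>P'. ptn' p \<in> P' \<and> ptn' p \<noteq> p \<and> ptn' (ptn' p) = p"
      proof
        fix p assume p: "p \<in> P'"
        show "ptn' p \<in> P' \<and> ptn' p \<noteq> p \<and> ptn' (ptn' p) = p"
        proof (cases "p = a \<or> p = b")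
          case True then show ?thesis using aP anb ptn'_def by auto
        next
          case False
          have pp: "p \<in> P" "p \<noteq> x" "p \<noteq> y" using p P'_def by auto
          have q: "ptn p \<in> P" "ptn p \<noteq> p" "ptn (ptn p) = p" using less.prems(2) pp by auto
          have "ptn p \<noteq> x" using q a_def False by metis
          moreover have "ptn p \<noteq> y" using q b_def False by metis
          moreover have "ptn p \<noteq> a" using q a pp by metis
          moreover have "ptn p \<noteq> b" using q b pp by metis
          ultimately show ?thesis using q False ptn'_def P'_def by auto
        qed
      qed
      obtain \<sigma> where s: "\<forall>p\<in>P'. \<sigma> (hx p) = pr p \<or> \<sigma> (hx (ptn' p)) = pr (ptn' p)"
        using less.hyps[OF lt fin' inv good] by blast
      have hab: "hx a \<noteq> v" "hx b \<noteq> v" using nv aP by auto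
      define \<tau> where "\<tau> = \<sigma>(v := (if \<sigma> (hx a) = pr a then pr y else pr x))"
      have tv: "\<forall>p\<in>P'. \<tau> (hx p) = \<sigma> (hx p)" using nv \<tau>_def by auto
      have sab: "\<sigma> (hx a) = pr a \<or> \<sigma> (hx b) = pr b" using s aP ptn'_def by auto
      have "\<forall>p\<in>P. \<tau> (hx p) = pr p \<or> \<tau> (hx (ptn p)) = pr (ptn p)"
      proof
        fix p assume "p \<in> P"
        show "\<tau> (hx p) = pr p \<or> \<tau> (hx (ptn p)) = pr (ptn p)"
        proof (cases "p \<in> P'")
          case True
          show ?thesis
          proof (cases "p = a \<or> p = b")
            case True
            then show ?thesis using a b x y tv aP sab \<tau>_def hab by auto
          next
            case False
            then have "ptn' p = ptn p" using ptn'_def by auto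
            moreover have "ptn p \<in> P'" using inv True \<open>ptn' p = ptn p\<close> by metis
            ultimately show ?thesis using s True tv by metis
          qed
        next
          case False
          then have "p = x \<or> p = y" using \<open>p \<in> P\<close> P'_def by blast
          then show ?thesis using a b x y tv aP sab \<tau>_def hab a_def b_def by auto
        qed
      qed
      then show ?thesis by blast
    qed
  qed
qed

lemma ar: "(j::nat)<6 \<Longrightarrow> k<6 \<Longrightarrow> m<6 \<Longrightarrow> even j \<noteq> even k \<Longrightarrow> k \<noteq> Suc j mod 6 \<Longrightarrow> j \<noteq> Suc k mod 6 \<Longrightarrow> m \<noteq> Suc j mod 6 \<Longrightarrow> m \<noteq> Suc k mod 6 \<Longrightarrow> j \<noteq> Suc m mod 6 \<Longrightarrow> k \<noteq> Suc m mod 6 \<Longrightarrow> m = j \<or> m = k"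
  apply (drule six)+ by auto

definition pvc :: "nat \<times> nat \<Rightarrow> nat \<times> nat" where "pvc p = (fst p, (snd p + 5) mod 6)"
definition sel :: "(nat \<Rightarrow> bool) \<Rightarrow> nat \<times> nat \<Rightarrow> bool" where "sel \<sigma> p = (\<sigma> (fst p) = even (snd p))"
definition shd :: "'a scheme \<Rightarrow> nat \<times> nat \<Rightarrow> bool" where
  "shd S p = (\<exists>q\<in>occs S. q \<noteq> p \<and> sym_at S q = sym_at S p)"
definition corr :: "'a scheme \<Rightarrow> nat \<times> nat \<Rightarrow> nat \<times> nat \<Rightarrow> nat \<times> nat \<Rightarrow> nat \<times> nat \<Rightarrow> bool" where
  "corr S p q c d = ((c = tail_at S p \<and> d = tail_at S q) \<or> (c = head_at S p \<and> d = head_at S q))"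
definition Nb :: "'a scheme \<Rightarrow> nat \<times> nat \<Rightarrow> (nat \<times> nat) set" where
  "Nb S c = {d. d = c \<or> (\<exists>p q. p\<in>occs S \<and> q\<in>occs S \<and> sym_at S p = sym_at S q \<and> p \<noteq> q \<and> corr S p q c d)}"

context
  fixes S :: "'a scheme"
  assumes hex: "hexagonal S" and fl: "flat S" and cata: "catacondensed S"
begin

lemma len6: "p \<in> occs S \<Longrightarrow> length (S ! fst p) = 6"
  using hex unfolding hexagonal_def occs_def by auto

lemma occsD: "p \<in> occs S \<Longrightarrow> fst p < length S \<and> snd p < 6"
  using len6 unfolding occs_def by auto

lemma occsI: "fst p < length S \<Longrightarrow> snd p < 6 \<Longrightarrow> p \<in> occs S"
  using hex unfolding hexagonal_def occs_def by auto

lemma nx_eq: "p \<in> occs S \<Longrightarrow> next_corner S p = (fst p, Suc (snd p) mod 6)"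
  using len6 unfolding next_corner_def by auto

lemma nx_occ: "p \<in> occs S \<Longrightarrow> next_corner S p \<in> occs S"
  using nx_eq occsD occsI by auto

lemma pv_occ: "p \<in> occs S \<Longrightarrow> pvc p \<in> occs S"
  using occsD occsI unfolding pvc_def by auto

lemma nx_pv: "p \<in> occs S \<Longrightarrow> next_corner S (pvc p) = p"
  using nx_eq[OF pv_occ, of p] occsD[of p] a4 unfolding pvc_def
  by (cases p) auto

lemma pv_nx: "p \<in> occs S \<Longrightarrow> pvc (next_corner S p) = p"
  using nx_eq[of p] occsD[of p] a3 unfolding pvc_def
  by (cases p) auto

lemma nx_ne: "p \<in> occs S \<Longrightarrow> next_corner S p \<noteq> p"
  using nx_eq[of p] occsD[of p] a1 by (cases p) auto

lemma pv_ne: "p \<in> occs S \<Longrightarrow> pvc p \<noteq> p"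
  using occsD[of p] a2 unfolding pvc_def by (cases p) auto

lemma sel_nx: "p \<in> occs S \<Longrightarrow> sel \<sigma> (next_corner S p) = (\<not> sel \<sigma> p)"
  using nx_eq[of p] occsD[of p] a5 unfolding sel_def by (cases p) auto

lemma sel_pv: "p \<in> occs S \<Longrightarrow> sel \<sigma> (pvc p) = (\<not> sel \<sigma> p)"
  using occsD[of p] a6 unfolding sel_def pvc_def by (cases p) auto

lemma fst_nx: "p \<in> occs S \<Longrightarrow> fst (next_corner S p) = fst p"
  using nx_eq by auto

lemma touch_iff: "p \<in> occs S \<Longrightarrow> c \<in> occs S \<Longrightarrow> (c = p \<or> c = next_corner S p) = (p = c \<or> p = pvc c)"
  using nx_pv pv_nx by metis

lemma th_set: "{tail_at S p, head_at S p} = {p, next_corner S p}"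
  unfolding tail_at_def head_at_def by auto

lemma th_ne: "p \<in> occs S \<Longrightarrow> tail_at S p \<noteq> head_at S p"
  using nx_ne[of p] unfolding tail_at_def head_at_def by (auto split: if_splits)

lemma th_occ: "p \<in> occs S \<Longrightarrow> tail_at S p \<in> occs S \<and> head_at S p \<in> occs S"
  using nx_occ unfolding tail_at_def head_at_def by auto

lemma fin_occs: "finite (occs S)"
proof -
  have "occs S \<subseteq> {..<length S} \<times> {..<6}" using occsD by auto
  then show ?thesis using finite_subset by blast
qed

lemma three: "p \<in> occs S \<Longrightarrow> q \<in> occs S \<Longrightarrow> r \<in> occs S \<Longrightarrow> sym_at S q = sym_at S p \<Longrightarrow>
   sym_at S r = sym_at S p \<Longrightarrow> p \<noteq> q \<Longrightarrow> r = p \<or> r = q"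
proof (rule ccontr)
  assume a: "p \<in> occs S" "q \<in> occs S" "r \<in> occs S" "sym_at S q = sym_at S p"
   "sym_at S r = sym_at S p" "p \<noteq> q" "\<not> (r = p \<or> r = q)"
  have "{p,q,r} \<subseteq> {x \<in> occs S. sym_at S x = sym_at S p}" using a by auto
  then have "card {p,q,r} \<le> occ_count S (sym_at S p)" unfolding occ_count_def
    by (intro card_mono) (auto intro: finite_subset[OF _ fin_occs])
  moreover have "card {p,q,r} = 3" using a by auto
  moreover have "occ_count S (sym_at S p) \<le> 2" using fl unfolding flat_def by auto
  ultimately show False by simp
qed

lemma cnt1: "p \<in> occs S \<Longrightarrow> (occ_count S (sym_at S p) = 1) = (\<not> shd S p)"
proof -
  assume p: "p \<in> occs S"
  let ?A = "{x \<in> occs S. sym_at S x = sym_at S p}"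
  have "p \<in> ?A" using p by auto
  have fa: "finite ?A" using fin_occs by auto
  have "card ?A = 1 \<longleftrightarrow> ?A = {p}"
  proof
    assume "card ?A = 1"
    then obtain x where "?A = {x}" using card_1_singleton_iff[of ?A] by auto
    then show "?A = {p}" using \<open>p \<in> ?A\<close> by auto
  qed simp
  also have "\<dots> \<longleftrightarrow> \<not> shd S p" unfolding shd_def using \<open>p \<in> ?A\<close> by auto
  finally show ?thesis unfolding occ_count_def .
qed

lemma shd_nx: "p \<in> occs S \<Longrightarrow> shd S p \<Longrightarrow> \<not> shd S (next_corner S p)"
  using cata cnt1 nx_occ unfolding catacondensed_def by metis

lemma shd_pv: "p \<in> occs S \<Longrightarrow> shd S (pvc p) \<Longrightarrow> \<not> shd S p"
  using shd_nx[OF pv_occ] nx_pv by metis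

lemma corner_uniq: "c \<in> occs S \<Longrightarrow> p \<in> occs S \<Longrightarrow> q \<in> occs S \<Longrightarrow> shd S p \<Longrightarrow> shd S q \<Longrightarrow>
  (c = p \<or> c = next_corner S p) \<Longrightarrow> (c = q \<or> c = next_corner S q) \<Longrightarrow> p = q"
  using touch_iff shd_pv by metis


lemma glue_iff: "(c,d) \<in> glue S \<longleftrightarrow> (\<exists>p q. p\<in>occs S \<and> q\<in>occs S \<and> sym_at S p = sym_at S q \<and> corr S p q c d)"
  unfolding glue_def corr_def by blast

lemma glue_sym: "sym (glue S)"
  unfolding sym_def glue_iff corr_def by metis

lemma corr_touch: "corr S p q c d \<Longrightarrow> (c = p \<or> c = next_corner S p) \<and> (d = q \<or> d = next_corner S q)"
  unfolding corr_def tail_at_def head_at_def by auto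

lemma corr_same: "corr S p p c d \<Longrightarrow> d = c"
  unfolding corr_def by auto

lemma shd_of: "p\<in>occs S \<Longrightarrow> q\<in>occs S \<Longrightarrow> p\<noteq>q \<Longrightarrow> sym_at S q = sym_at S p \<Longrightarrow> shd S p \<and> shd S q"
  unfolding shd_def by metis

lemma touch_occ: "p \<in> occs S \<Longrightarrow> (d = p \<or> d = next_corner S p) \<Longrightarrow> d \<in> occs S"
  using nx_occ[of p] by auto

lemma vertex_Nb: "c \<in> occs S \<Longrightarrow> vertex_of S c = Nb S c"
proof
  assume cO: "c \<in> occs S"
  show "vertex_of S c \<subseteq> Nb S c"
  proof
    fix e assume "e \<in> vertex_of S c"
    then have "(c,e) \<in> (glue S)\<^sup>*" unfolding vertex_of_def by auto
    then show "e \<in> Nb S c"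
    proof (induction rule: rtrancl_induct)
      case base then show ?case unfolding Nb_def by auto
    next
      case (step d e)
      from step.hyps(2) obtain p' q' where pq': "p'\<in>occs S" "q'\<in>occs S" "sym_at S p' = sym_at S q'" "corr S p' q' d e"
        by (auto simp: glue_iff)
      show ?case
      proof (cases "p' = q'")
        case True then have "e = d" using corr_same pq' by auto
        then show ?thesis using step.IH by simp
      next
        case False
        show ?thesis
        proof (cases "d = c")
          case True then show ?thesis unfolding Nb_def using pq' False by blast
        next
          case dc: False
          from step.IH dc obtain p q where pq: "p\<in>occs S" "q\<in>occs S" "sym_at S p = sym_at S q" "p\<noteq>q" "corr S p q c d"
            unfolding Nb_def by auto
          have dO: "d \<in> occs S" using corr_touch[OF pq(5)] touch_occ pq(2) by blast
          have s1: "shd S q" using shd_of[of p q] pq by auto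
          have s2: "shd S p'" using shd_of[of p' q'] pq' False by auto
          have "p' = q"
            by (rule corner_uniq[OF dO pq'(1) pq(2) s2 s1]) (use corr_touch[OF pq'(4)] corr_touch[OF pq(5)] in auto)
          then have "q' = p" using three[of q p q'] pq pq' False by auto
          then have "corr S q p d e" using pq' \<open>p' = q\<close> by simp
          then have "e = c" using pq(5) th_ne[OF pq(2)] unfolding corr_def by auto
          then show ?thesis unfolding Nb_def by auto
        qed
      qed
    qed
  qed
next
  show "Nb S c \<subseteq> vertex_of S c" unfolding Nb_def vertex_of_def using glue_iff by blast
qed

lemma vertex_eq: "c \<in> occs S \<Longrightarrow> d \<in> occs S \<Longrightarrow> (vertex_of S c = vertex_of S d) = (d \<in> Nb S c)"
proof
  assume "c \<in> occs S" "d \<in> occs S" "vertex_of S c = vertex_of S d"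
  moreover have "d \<in> vertex_of S d" unfolding vertex_of_def by auto
  ultimately show "d \<in> Nb S c" using vertex_Nb by auto
next
  assume c: "c \<in> occs S" "d \<in> occs S" "d \<in> Nb S c"
  then have cd: "(c,d) \<in> (glue S)\<^sup>*" using vertex_Nb[OF c(1)] unfolding vertex_of_def by (metis Image_singleton_iff)
  then have dc: "(d,c) \<in> (glue S)\<^sup>*" using glue_sym sym_rtrancl unfolding sym_def by blast
  show "vertex_of S c = vertex_of S d" unfolding vertex_of_def
    using cd dc by (auto intro: rtrancl_trans)
qed


lemma ends_iff: "v \<in> edge_ends S a \<longleftrightarrow> (\<exists>p\<in>occs S. sym_at S p = a \<and> (v = vertex_of S p \<or> v = vertex_of S (next_corner S p)))"
  unfolding edge_ends_def tail_at_def head_at_def by auto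

lemma Nb_occ: "c \<in> occs S \<Longrightarrow> Nb S c \<subseteq> occs S"
  unfolding Nb_def using corr_touch touch_occ by blast

lemma ends_vertex: "c \<in> occs S \<Longrightarrow> (vertex_of S c \<in> edge_ends S e) = (\<exists>d\<in>Nb S c. \<exists>p\<in>occs S. sym_at S p = e \<and> (p = d \<or> p = pvc d))"
proof -
  assume c: "c \<in> occs S"
  have "(vertex_of S c \<in> edge_ends S e) = (\<exists>p\<in>occs S. sym_at S p = e \<and> (\<exists>d. (d = p \<or> d = next_corner S p) \<and> d \<in> Nb S c))"
    unfolding ends_iff using vertex_eq[OF c] nx_occ by blast
  also have "\<dots> = (\<exists>d\<in>Nb S c. \<exists>p\<in>occs S. sym_at S p = e \<and> (p = d \<or> p = pvc d))"
    using touch_iff Nb_occ[OF c] touch_occ by blast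
  finally show ?thesis .
qed

lemma cornerpair: "d \<in> occs S \<Longrightarrow> (s = d \<or> s = pvc d) \<Longrightarrow> shd S s \<Longrightarrow>
  \<exists>u. u \<in> occs S \<and> {d, pvc d} = {s,u} \<and> \<not> shd S u \<and> (\<forall>\<sigma>. sel \<sigma> u = (\<not> sel \<sigma> s))"
proof -
  assume d: "d \<in> occs S" and s: "s = d \<or> s = pvc d" and sh: "shd S s"
  show ?thesis
  proof (cases "s = d")
    case True
    then show ?thesis using d sh shd_pv[OF d] pv_occ[OF d] sel_pv[OF d] by (intro exI[of _ "pvc d"]) auto
  next
    case False
    then have "s = pvc d" using s by auto
    then show ?thesis using d sh shd_pv[OF d] pv_occ[OF d] sel_pv[OF d] by (intro exI[of _ d]) auto
  qed
qed

lemma nonadj: "u \<in> occs S \<Longrightarrow> w \<in> occs S \<Longrightarrow> shd S u \<Longrightarrow> shd S w \<Longrightarrow> fst u = fst w \<Longrightarrow> snd w \<noteq> Suc (snd u) mod 6"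
  using shd_nx nx_eq by (metis prod.collapse)

theorem kek: "kekulean S"
proof -
  define P where "P = {p\<in>occs S. shd S p}"
  define ptn where "ptn p = (SOME q. q\<in>occs S \<and> q\<noteq>p \<and> sym_at S q = sym_at S p)" for p
  have ptn: "ptn p \<in> occs S \<and> ptn p \<noteq> p \<and> sym_at S (ptn p) = sym_at S p" if "p \<in> P" for p
  proof -
    have "\<exists>q. q\<in>occs S \<and> q\<noteq>p \<and> sym_at S q = sym_at S p" using that unfolding P_def shd_def by auto
    then show ?thesis unfolding ptn_def by (rule someI_ex)
  qed
  have inv: "\<forall>p\<in>P. ptn p \<in> P \<and> ptn p \<noteq> p \<and> ptn (ptn p) = p"
  proof
    fix p assume p: "p \<in> P"
    have pO: "p \<in> occs S" using p P_def by auto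
    have q: "ptn p \<in> occs S" "ptn p \<noteq> p" "sym_at S (ptn p) = sym_at S p" using ptn[OF p] by auto
    have qP: "ptn p \<in> P" unfolding P_def using q shd_of[OF pO q(1)] by auto
    have r: "ptn (ptn p) \<in> occs S" "ptn (ptn p) \<noteq> ptn p" "sym_at S (ptn (ptn p)) = sym_at S (ptn p)" using ptn[OF qP] by auto
    have "ptn (ptn p) = p" using three[OF pO q(1) r(1)] q r by auto
    then show "ptn p \<in> P \<and> ptn p \<noteq> p \<and> ptn (ptn p) = p" using qP q by auto
  qed
  have good: "\<forall>v. (\<forall>p\<in>P. \<forall>q\<in>P. fst p = v \<and> fst q = v \<longrightarrow> even (snd p) = even (snd q)) \<or>
     (\<exists>x y. {p\<in>P. fst p = v} = {x,y} \<and> even (snd x) \<noteq> even (snd y))"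
  proof
    fix v
    show "(\<forall>p\<in>P. \<forall>q\<in>P. fst p = v \<and> fst q = v \<longrightarrow> even (snd p) = even (snd q)) \<or>
     (\<exists>x y. {p\<in>P. fst p = v} = {x,y} \<and> even (snd x) \<noteq> even (snd y))"
    proof (cases "\<forall>p\<in>P. \<forall>q\<in>P. fst p = v \<and> fst q = v \<longrightarrow> even (snd p) = even (snd q)")
      case True then show ?thesis by blast
    next
      case False
      then obtain x y where xy: "x \<in> P" "y \<in> P" "fst x = v" "fst y = v" "even (snd x) \<noteq> even (snd y)" by blast
      have "{p\<in>P. fst p = v} = {x,y}"
      proof
        show "{x,y} \<subseteq> {p\<in>P. fst p = v}" using xy by auto
        show "{p\<in>P. fst p = v} \<subseteq> {x,y}"
        proof
          fix z assume z: "z \<in> {p\<in>P. fst p = v}"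
          have A: "x \<in> occs S" "shd S x" "y \<in> occs S" "shd S y" "z \<in> occs S" "shd S z" "fst z = v"
            using xy z P_def by auto
          have "snd z = snd x \<or> snd z = snd y"
            apply (rule ar)
            using occsD A xy nonadj by metis+
          then show "z \<in> {x,y}" using A xy by (auto simp: prod_eq_iff)
        qed
      qed
      then show ?thesis using xy by blast
    qed
  qed
  have finP: "finite P" unfolding P_def using fin_occs by auto
  obtain \<sigma> where sig: "\<forall>p\<in>P. \<sigma> (fst p) = even (snd p) \<or> \<sigma> (fst (ptn p)) = even (snd (ptn p))"
    using choose_sigma[OF finP inv good] by blast
  have clause: "sel \<sigma> p \<or> sel \<sigma> q" if "p \<in> occs S" "q \<in> occs S" "p \<noteq> q" "sym_at S q = sym_at S p" for p q
  proof -
    have pP: "p \<in> P" unfolding P_def using that shd_of by auto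
    have "ptn p = q" using three[OF that(1) that(2), of "ptn p"] ptn[OF pP] that by auto
    then show ?thesis using sig pP unfolding sel_def by auto
  qed
  define M where "M = {a \<in> symbols S. \<forall>p\<in>occs S. sym_at S p = a \<longrightarrow> sel \<sigma> p}"
  have memU: "sym_at S p \<in> M \<longleftrightarrow> sel \<sigma> p" if "p \<in> occs S" "\<not> shd S p" for p
    using that unfolding M_def symbols_def shd_def by auto
  have memS: "sym_at S p \<in> M \<longleftrightarrow> sel \<sigma> p \<and> sel \<sigma> q" if "p \<in> occs S" "q \<in> occs S" "p \<noteq> q" "sym_at S q = sym_at S p" for p q
    using that three[OF that(1) that(2)] unfolding M_def symbols_def by auto
  have sub: "M \<subseteq> symbols S" unfolding M_def by auto
  have card2: "card (edge_ends S a) = 2" if a: "a \<in> M" for a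
  proof -
    obtain p0 where p0: "p0 \<in> occs S" "a = sym_at S p0" using a unfolding M_def symbols_def by auto
    have selp0: "sel \<sigma> p0" using a p0 unfolding M_def by auto
    have tO: "tail_at S p0 \<in> occs S" "head_at S p0 \<in> occs S" using th_occ[OF p0(1)] by auto
    have E: "edge_ends S a = {vertex_of S p0, vertex_of S (next_corner S p0)}"
    proof
      show "{vertex_of S p0, vertex_of S (next_corner S p0)} \<subseteq> edge_ends S a"
        using p0 ends_iff by blast
      show "edge_ends S a \<subseteq> {vertex_of S p0, vertex_of S (next_corner S p0)}"
      proof
        fix v assume "v \<in> edge_ends S a"
        then obtain p where p: "p \<in> occs S" "sym_at S p = a" "v = vertex_of S (tail_at S p) \<or> v = vertex_of S (head_at S p)"
          unfolding edge_ends_def by auto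
        have "v \<in> {vertex_of S (tail_at S p0), vertex_of S (head_at S p0)}"
        proof (cases "p = p0")
          case True then show ?thesis using p by auto
        next
          case False
          have c1: "corr S p0 p (tail_at S p0) (tail_at S p)" "corr S p0 p (head_at S p0) (head_at S p)"
            unfolding corr_def by auto
          have "tail_at S p \<in> Nb S (tail_at S p0)" "head_at S p \<in> Nb S (head_at S p0)"
            unfolding Nb_def mem_Collect_eq using c1 p p0 False
            by (intro disjI2 exI[of _ p0] exI[of _ p]; simp)+
          then have "vertex_of S (tail_at S p0) = vertex_of S (tail_at S p)"
              "vertex_of S (head_at S p0) = vertex_of S (head_at S p)"
            using vertex_eq[OF tO(1), of "tail_at S p"] vertex_eq[OF tO(2), of "head_at S p"] th_occ[OF p(1)] by blast+
          then show ?thesis using p by auto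
        qed
        also have "\<dots> = vertex_of S ` {tail_at S p0, head_at S p0}" by simp
        also have "\<dots> = vertex_of S ` {p0, next_corner S p0}" by (simp only: th_set)
        also have "\<dots> = {vertex_of S p0, vertex_of S (next_corner S p0)}" by simp
        finally show "v \<in> {vertex_of S p0, vertex_of S (next_corner S p0)}" .
      qed
    qed
    have D: "vertex_of S p0 \<noteq> vertex_of S (next_corner S p0)"
    proof
      assume "vertex_of S p0 = vertex_of S (next_corner S p0)"
      then have "next_corner S p0 \<in> Nb S p0" using vertex_eq[OF p0(1) nx_occ[OF p0(1)]] by blast
      then obtain p q where pq: "p\<in>occs S" "q\<in>occs S" "sym_at S p = sym_at S q" "p \<noteq> q" "corr S p q p0 (next_corner S p0)"
        unfolding Nb_def using nx_ne[OF p0(1)] by auto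
      have sp: "shd S p" "shd S q" using shd_of[OF pq(1) pq(2) pq(4)] pq(3) by auto
      have tp: "p0 = p \<or> p0 = next_corner S p" and tq: "next_corner S p0 = q \<or> next_corner S p0 = next_corner S q"
        using corr_touch[OF pq(5)] by auto
      show False
      proof (cases "shd S p0")
        case True
        have "p = p0" using corner_uniq[OF p0(1) pq(1) p0(1) sp(1) True] tp by auto
        moreover have "q = p0" using corner_uniq[OF nx_occ[OF p0(1)] pq(2) p0(1) sp(2) True] tq by auto
        ultimately show False using pq(4) by simp
      next
        case False
        have "p \<noteq> p0" "q \<noteq> p0" using False sp by auto
        then have "p = pvc p0" "q = next_corner S p0"
          using touch_iff[OF pq(1) p0(1)] tp touch_iff[OF pq(2) nx_occ[OF p0(1)]] tq pv_nx[OF p0(1)] by auto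
        then have "\<not> sel \<sigma> p" "\<not> sel \<sigma> q" using sel_pv sel_nx p0 selp0 by auto
        then show False using clause[OF pq(1) pq(2) pq(4)] pq(3) by auto
      qed
    qed
    show ?thesis using E D by simp
  qed
  have uniq: "\<exists>!e. e \<in> M \<and> v \<in> edge_ends S e" if v: "v \<in> vertices S" for v
  proof -
    obtain c where c: "c \<in> occs S" "v = vertex_of S c" using v unfolding vertices_def corners_def by auto
    have key: "(e \<in> M \<and> v \<in> edge_ends S e) = (e \<in> M \<and> (\<exists>d\<in>Nb S c. \<exists>p\<in>occs S. sym_at S p = e \<and> (p = d \<or> p = pvc d)))" for e
      using ends_vertex[OF c(1)] c(2) by auto
    show ?thesis
    proof (cases "shd S c \<or> shd S (pvc c)")
      case False
      have Nc: "Nb S c = {c}"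
      proof -
        { fix d assume "d \<in> Nb S c" "d \<noteq> c"
          then obtain p q where pq: "p\<in>occs S" "q\<in>occs S" "sym_at S p = sym_at S q" "p \<noteq> q" "corr S p q c d"
            unfolding Nb_def by auto
          have "shd S p" using shd_of[OF pq(1) pq(2) pq(4)] pq(3) by auto
          moreover have "p = c \<or> p = pvc c" using touch_iff[OF pq(1) c(1)] corr_touch[OF pq(5)] by auto
          ultimately have False using False by auto }
        moreover have "c \<in> Nb S c" unfolding Nb_def by simp
        ultimately show ?thesis by blast
      qed
      have k2: "(e \<in> M \<and> v \<in> edge_ends S e) = (e \<in> M \<and> (e = sym_at S c \<or> e = sym_at S (pvc c)))" for e
        unfolding key Nc using c pv_occ[OF c(1)] by auto
      have m1: "sym_at S c \<in> M \<longleftrightarrow> sel \<sigma> c" using memU c False by auto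
      have m2: "sym_at S (pvc c) \<in> M \<longleftrightarrow> \<not> sel \<sigma> c" using memU[OF pv_occ[OF c(1)]] c False sel_pv by auto
      show ?thesis unfolding k2 using m1 m2 by (cases "sel \<sigma> c") auto
    next
      case True
      then obtain s where s: "s = c \<or> s = pvc c" "shd S s" by blast
      have sO: "s \<in> occs S" using s c pv_occ[OF c(1)] by auto
      obtain u where u: "u \<in> occs S" "{c, pvc c} = {s,u}" "\<not> shd S u" "sel \<sigma> u = (\<not> sel \<sigma> s)"
        using cornerpair[OF c(1) s] by blast
      obtain t where t: "t \<in> occs S" "t \<noteq> s" "sym_at S t = sym_at S s" using s(2) unfolding shd_def by auto
      have ct: "c = tail_at S s \<or> c = head_at S s" using touch_iff[OF sO c(1)] s(1) th_set[of s] by blast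
      define c' where "c' = (if c = tail_at S s then tail_at S t else head_at S t)"
      have corr: "corr S s t c c'" unfolding corr_def c'_def using ct by auto
      have c'O: "c' \<in> occs S" unfolding c'_def using th_occ[OF t(1)] by auto
      have tsh: "shd S t" using shd_of[OF sO t(1) t(2)[symmetric]] t(3) by auto
      have tt: "t = c' \<or> t = pvc c'"
        using touch_iff[OF t(1) c'O] corr_touch[OF corr] by auto
      obtain u' where u': "u' \<in> occs S" "{c', pvc c'} = {t,u'}" "\<not> shd S u'" "sel \<sigma> u' = (\<not> sel \<sigma> t)"
        using cornerpair[OF c'O tt tsh] by blast
      have Nc: "Nb S c = {c, c'}"
      proof
        have "c' \<in> Nb S c" unfolding Nb_def mem_Collect_eq using corr sO t
          by (intro disjI2 exI[of _ s] exI[of _ t]) auto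
        then show "{c, c'} \<subseteq> Nb S c" unfolding Nb_def by auto
        show "Nb S c \<subseteq> {c, c'}"
        proof
          fix d assume d: "d \<in> Nb S c"
          show "d \<in> {c, c'}"
          proof (cases "d = c")
            case False
            then obtain p q where pq: "p\<in>occs S" "q\<in>occs S" "sym_at S p = sym_at S q" "p \<noteq> q" "corr S p q c d"
              using d unfolding Nb_def by auto
            have "shd S p" using shd_of[OF pq(1) pq(2) pq(4)] pq(3) by auto
            then have "p = s" using corner_uniq[OF c(1) pq(1) sO _ s(2)] corr_touch[OF pq(5)] touch_iff[OF sO c(1)] s(1) by auto
            then have "q = t" using three[OF sO t(1) pq(2)] t pq by auto
            then have "d = c'" using pq(5) corr th_ne[OF sO] \<open>p = s\<close> unfolding corr_def by auto
            then show ?thesis by auto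
          qed auto
        qed
      qed
      have k2: "(e \<in> M \<and> v \<in> edge_ends S e) = (e \<in> M \<and> (e = sym_at S s \<or> e = sym_at S u \<or> e = sym_at S u'))" for e
      proof -
        have SE: "{c, pvc c, c', pvc c'} = {s, u, t, u'}"
        proof -
          have "{c, pvc c, c', pvc c'} = {c, pvc c} \<union> {c', pvc c'}" by auto
          also have "\<dots> = {s, u} \<union> {t, u'}" by (simp only: u(2) u'(2))
          finally show ?thesis by auto
        qed
        have "(\<exists>d\<in>Nb S c. \<exists>p\<in>occs S. sym_at S p = e \<and> (p = d \<or> p = pvc d)) =
              (\<exists>p\<in>{c, pvc c, c', pvc c'}. p \<in> occs S \<and> sym_at S p = e)" unfolding Nc by auto
        also have "\<dots> = (\<exists>p\<in>{s, u, t, u'}. p \<in> occs S \<and> sym_at S p = e)" by (simp only: SE)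
        also have "\<dots> = (e = sym_at S s \<or> e = sym_at S u \<or> e = sym_at S u')" using sO u t u' by auto
        finally show ?thesis unfolding key by simp
      qed
      have m1: "sym_at S s \<in> M \<longleftrightarrow> sel \<sigma> s \<and> sel \<sigma> t" using memS[OF sO t(1) t(2)[symmetric] t(3)] .
      have m2: "sym_at S u \<in> M \<longleftrightarrow> \<not> sel \<sigma> s" using memU[OF u(1) u(3)] u(4) by auto
      have m3: "sym_at S u' \<in> M \<longleftrightarrow> \<not> sel \<sigma> t" using memU[OF u'(1) u'(3)] u'(4) by auto
      have cl: "sel \<sigma> s \<or> sel \<sigma> t" using clause[OF sO t(1) t(2)[symmetric] t(3)] .
      show ?thesis unfolding k2 using m1 m2 m3 cl by (cases "sel \<sigma> s"; cases "sel \<sigma> t") auto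
    qed
  qed
  have "perfect_matching (vertices S) (symbols S) (edge_ends S) M"
    unfolding perfect_matching_def using sub card2 uniq by blast
  then show ?thesis unfolding kekulean_def by blast
qed

end
theorem mainTheorem1:
  fixes B :: "'a scheme"
  assumes "cata_flat_hex_complex B"
  shows "kekulean B"
  using assms kek unfolding cata_flat_hex_complex_def by blast

end
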